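(* Let $k_1,k_2,k_1',k_2'\ge0$ be integers. Then (i) $(1+t)^{k_1}(1-t)^{k_2}\doteq1$ if and only if $k_1=k_2=0$; (ii) $(1+t)^{k_1}(1-t)^{k_2}\doteq(1+t)^{k_1'}(1-t)^{k_2'}$ if and only if $k_1=k_1'$ and $k_2=k_2'$.
   Context: Let $I_t$ be the ideal of $\mathbb Z[t^{\pm1/2}]$ generated by $\frac{t^5+1}{t+1}=t^4-t^3+t^2-t+1$. For $f,g\in\mathbb Z[t^{\pm1/2}]$ write $f\doteq g$ if $f\equiv\pm t^{i/2}g\pmod{I_t}$ for some sign and some integer $i$. *)

theory Defs
  imports "HOL-Computational_Algebra.Formal_Laurent_Series"
begin

text \<open>We write s = t^(1/2). The ring Z[t^(+-1/2)] = Z[s, s^-1] is realised as the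
  subring of integer formal Laurent series in s with finite support.\<close>

definition laurent_poly :: "int fls \<Rightarrow> bool" where
  "laurent_poly f \<longleftrightarrow> finite {n. fls_nth f n \<noteq> 0}"

definition tt :: "int fls" where
  "tt = fls_X ^ 2"

definition Phi10 :: "int fls" where
  "Phi10 = tt^4 - tt^3 + tt^2 - tt + 1"

definition I_t :: "int fls set" where
  "I_t = {q * Phi10 | q. laurent_poly q}"

text \<open>f doteq g iff f = +- t^(i/2) g mod I_t, i.e. +- s^i g.\<close>
definition doteq :: "int fls \<Rightarrow> int fls \<Rightarrow> bool" where
  "doteq f g \<longleftrightarrow> (\<exists>\<epsilon>\<in>{1, -1::int fls}. \<exists>i::int. f - \<epsilon> * fls_X_intpow i * g \<in> I_t)"

end

theory Submission
  imports Defs Complex_Main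
begin

definition Phi :: "int poly \<Rightarrow> int fls" where
  "Phi p = fps_to_fls (fps_of_poly p)"

lemma Phi_mult: "Phi (p * q) = Phi p * Phi q"
  by (simp add: Phi_def fps_of_poly_mult fls_times_fps_to_fls)
lemma Phi_add: "Phi (p + q) = Phi p + Phi q"
  by (simp add: Phi_def fps_of_poly_add)
lemma Phi_diff: "Phi (p - q) = Phi p - Phi q"
  by (simp add: Phi_def fps_of_poly_diff)
lemma Phi_1: "Phi 1 = 1"
  by (simp add: Phi_def)
lemma Phi_uminus1: "Phi (-1) = -1"
  using Phi_diff[of 0 1] by (simp add: Phi_1 Phi_def)
lemma Phi_power: "Phi (p ^ n) = Phi p ^ n"
  by (simp add: Phi_def fps_of_poly_power fps_to_fls_power)
lemma Phi_monom: "Phi (monom 1 n) = fls_X ^ n"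
  by (simp add: Phi_def fps_of_poly_monom' fps_to_fls_power)
lemma Phi_inj: "Phi p = Phi q \<Longrightarrow> p = q"
  by (simp add: Phi_def fps_of_poly_eq_iff)

definition E :: "complex \<Rightarrow> int poly \<Rightarrow> complex" where
  "E z p = poly (map_poly of_int p) z"

lemma map_poly_of_int_mult:
  "map_poly (of_int :: int \<Rightarrow> complex) (p * q) = map_poly of_int p * map_poly of_int q"
  by (simp add: poly_eq_iff coeff_map_poly coeff_mult of_int_sum)

lemma map_poly_of_int_add:
  "map_poly (of_int :: int \<Rightarrow> complex) (p + q) = map_poly of_int p + map_poly of_int q"
  by (simp add: poly_eq_iff coeff_map_poly)

lemma map_poly_of_int_diff:
  "map_poly (of_int :: int \<Rightarrow> complex) (p - q) = map_poly of_int p - map_poly of_int q"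
  by (simp add: poly_eq_iff coeff_map_poly)

lemma E_mult: "E z (p * q) = E z p * E z q"
  by (simp add: E_def map_poly_of_int_mult)
lemma E_add: "E z (p + q) = E z p + E z q"
  by (simp add: E_def map_poly_of_int_add)
lemma E_diff: "E z (p - q) = E z p - E z q"
  by (simp add: E_def map_poly_of_int_diff)
lemma E_1: "E z 1 = 1"
  by (simp add: E_def)
lemma E_uminus1: "E z (-1) = -1"
  using E_diff[of z 0 1] by (simp add: E_1 E_def)
lemma E_power: "E z (p ^ n) = E z p ^ n"
  by (induction n) (simp_all add: E_1 E_mult)
lemma E_monom: "E z (monom 1 n) = z ^ n"
  by (simp add: E_def map_poly_monom poly_monom)

lemma laurent_shift:
  assumes "laurent_poly q"
  shows "\<exists>N::nat. \<exists>p. int N \<ge> K \<and> fls_X_intpow (int N) * q = Phi p"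
proof -
  define S where "S = {n. fls_nth q n \<noteq> 0}"
  have fin: "finite S" using assms by (simp add: laurent_poly_def S_def)
  obtain L where L: "\<And>n. n \<in> S \<Longrightarrow> L \<le> n"
    using bdd_below_finite[OF fin] by (auto simp: bdd_below_def)
  obtain U where U: "\<And>n. n \<in> S \<Longrightarrow> n \<le> U"
    using bdd_above_finite[OF fin] by (auto simp: bdd_above_def)
  define N where "N = nat (max K (-L))"
  define p where "p = Abs_poly (\<lambda>k. fls_nth q (int k - int N))"
  have cp: "coeff p = (\<lambda>k. fls_nth q (int k - int N))"
    unfolding p_def
  proof (rule coeff_Abs_poly[where n = "nat (U + int N)"])
    fix i assume "i > nat (U + int N)"
    hence "int i - int N \<notin> S" using U by force
    thus "fls_nth q (int i - int N) = 0" by (simp add: S_def)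
  qed
  have "fls_X_intpow (int N) * q = Phi p"
  proof (subst fls_eq_iff, intro allI)
    fix n
    show "fls_nth (fls_X_intpow (int N) * q) n = fls_nth (Phi p) n"
    proof (cases "n < 0")
      case True
      hence "n - int N \<notin> S" using L[of "n - int N"] by (auto simp: N_def)
      thus ?thesis using True by (simp add: fls_X_intpow_times_conv_shift Phi_def S_def)
    next
      case False
      thus ?thesis by (simp add: fls_X_intpow_times_conv_shift Phi_def cp)
    qed
  qed
  moreover have "int N \<ge> K" by (simp add: N_def, linarith)
  ultimately show ?thesis by blast
qed

definition TT :: "int poly" where "TT = monom 1 2"
definition PP :: "int poly" where "PP = TT^4 - TT^3 + TT^2 - TT + 1"
definition Pf :: "nat \<Rightarrow> nat \<Rightarrow> int poly" where "Pf a b = (1 + TT)^a * (1 - TT)^b"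

lemma Phi_TT: "Phi TT = tt"
  by (simp add: TT_def tt_def Phi_monom)
lemma Phi_PP: "Phi PP = Phi10"
  by (simp add: PP_def Phi10_def Phi_add Phi_diff Phi_power Phi_TT Phi_1)
lemma Phi_Pf: "Phi (Pf a b) = (1 + tt)^a * (1 - tt)^b"
  by (simp add: Pf_def Phi_mult Phi_add Phi_diff Phi_power Phi_TT Phi_1)

lemma X_intpow_nat: "fls_X_intpow (int n) = (fls_X ^ n :: int fls)"
  by (simp add: fls_X_power_conv_shift_1)

lemma poly_eq:
  assumes "doteq ((1 + tt)^a * (1 - tt)^b) ((1 + tt)^a' * (1 - tt)^b')"
  shows "\<exists>N m e p. (e = 1 \<or> e = -1) \<and> monom 1 N * Pf a b - e * monom 1 m * Pf a' b' = p * PP"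
proof -
  let ?F = "(1 + tt)^a * (1 - tt)^b" and ?G = "(1 + tt)^a' * (1 - tt)^b'"
  obtain \<epsilon> i q where eps: "\<epsilon> \<in> {1, -1}" and q: "laurent_poly q"
    and eq: "?F - \<epsilon> * fls_X_intpow i * ?G = q * Phi10"
  proof -
    from assms obtain \<epsilon> i where "\<epsilon> \<in> {1, -1}" "?F - \<epsilon> * fls_X_intpow i * ?G \<in> I_t"
      unfolding doteq_def by blast
    then show ?thesis using that unfolding I_t_def by blast
  qed
  obtain N p where N: "int N \<ge> -i" and p: "fls_X_intpow (int N) * q = Phi p"
    using laurent_shift[OF q, of "-i"] by blast
  define m where "m = nat (int N + i)"
  have m: "int m = int N + i" using N by (simp add: m_def)
  define e :: "int poly" where "e = (if \<epsilon> = 1 then 1 else -1)"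
  have e: "Phi e = \<epsilon>" using eps by (auto simp: e_def Phi_1 Phi_uminus1)
  have Xm: "fls_X_intpow (int N) * fls_X_intpow i = (fls_X ^ m :: int fls)"
    by (simp only: fls_X_intpow_times_fls_X_intpow flip: m X_intpow_nat)
  have "Phi (monom 1 N * Pf a b - e * monom 1 m * Pf a' b')
      = fls_X_intpow (int N) * (?F - \<epsilon> * fls_X_intpow i * ?G)"
    by (simp add: Phi_mult Phi_diff Phi_monom Phi_Pf e X_intpow_nat algebra_simps
         flip: Xm)
  also have "\<dots> = (fls_X_intpow (int N) * q) * Phi10"
    unfolding eq by (rule mult.assoc[symmetric])
  also have "\<dots> = Phi (p * PP)"
    by (simp only: p Phi_mult Phi_PP)
  finally have "monom 1 N * Pf a b - e * monom 1 m * Pf a' b' = p * PP" by (rule Phi_inj)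
  moreover have "e = 1 \<or> e = -1" by (simp add: e_def)
  ultimately show ?thesis by blast
qed

lemma E_TT: "E z TT = z^2"
  by (simp add: TT_def E_monom)
lemma E_PP: "E z PP = (z^2)^4 - (z^2)^3 + (z^2)^2 - z^2 + 1"
  by (simp add: PP_def E_add E_diff E_power E_TT E_1)
lemma E_Pf: "E z (Pf a b) = (1 + z^2)^a * (1 - z^2)^b"
  by (simp add: Pf_def E_add E_diff E_mult E_power E_TT E_1)

lemma norm_rel:
  assumes z: "cmod z = 1" and PP0: "E z PP = 0"
    and d: "doteq ((1 + tt)^a * (1 - tt)^b) ((1 + tt)^a' * (1 - tt)^b')"
  shows "(cmod (1 + z^2)^2)^a * (cmod (1 - z^2)^2)^b
       = (cmod (1 + z^2)^2)^a' * (cmod (1 - z^2)^2)^b'"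
proof -
  obtain N m e p where e: "e = 1 \<or> e = -1"
    and eq: "monom 1 N * Pf a b - e * monom 1 m * Pf a' b' = p * PP"
    using poly_eq[OF d] by blast
  have "E z (monom 1 N * Pf a b - e * monom 1 m * Pf a' b') = E z (p * PP)"
    by (simp only: eq)
  hence "z^N * ((1 + z^2)^a * (1 - z^2)^b) = E z e * z^m * ((1 + z^2)^a' * (1 - z^2)^b')"
    by (simp add: E_mult E_diff E_monom E_Pf PP0)
  hence "cmod (z^N * ((1 + z^2)^a * (1 - z^2)^b))
        = cmod (E z e * z^m * ((1 + z^2)^a' * (1 - z^2)^b'))" by simp
  moreover have "cmod (E z e) = 1" using e by (auto simp: E_1 E_uminus1)
  ultimately have "cmod (1 + z^2)^a * cmod (1 - z^2)^b = cmod (1 + z^2)^a' * cmod (1 - z^2)^b'"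
    by (simp add: norm_mult norm_power z)
  hence "(cmod (1 + z^2)^a * cmod (1 - z^2)^b)^2 = (cmod (1 + z^2)^a' * cmod (1 - z^2)^b')^2"
    by simp
  thus ?thesis by (simp add: power_mult_distrib flip: power_mult) (simp add: mult.commute)
qed

lemma cis_norms:
  "cmod (1 + cis t)^2 = 2 + 2 * cos t" "cmod (1 - cis t)^2 = 2 - 2 * cos t"
proof -
  have "sin t ^ 2 + cos t ^ 2 = 1" by simp
  thus "cmod (1 + cis t)^2 = 2 + 2 * cos t" "cmod (1 - cis t)^2 = 2 - 2 * cos t"
    unfolding cmod_power2 by (simp_all add: power2_eq_square algebra_simps)
qed

lemma PP_root:
  assumes "w^5 = -1" "w \<noteq> (-1::complex)"
  shows "w^4 - w^3 + w^2 - w + 1 = 0"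
proof -
  have "(w + 1) * (w^4 - w^3 + w^2 - w + 1) = w^5 + 1" by algebra
  also have "\<dots> = 0" using assms by simp
  finally have *: "(w + 1) * (w^4 - w^3 + w^2 - w + 1) = 0" .
  have "w + 1 \<noteq> 0" using assms(2) by (simp add: add_eq_0_iff2)
  thus ?thesis using * by simp
qed

lemma cos_quad:
  assumes "(cis t)^4 - (cis t)^3 + (cis t)^2 - cis t + 1 = 0"
  shows "4 * cos t ^ 2 - 2 * cos t - 1 = 0"
proof -
  define w where "w = cis t"
  define u where "u = cnj w"
  have wu: "w * u = 1" by (simp add: w_def u_def cis_cnj cis_mult)
  have s: "w + u = complex_of_real (2 * cos t)" by (simp add: u_def w_def complex_add_cnj)
  have "w^2 * ((w + u)^2 - (w + u) - 1) = w^4 - w^3 + w^2 - w + 1"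
    using wu by algebra
  also have "\<dots> = 0" using assms by (simp add: w_def)
  finally have "(w + u)^2 - (w + u) - 1 = 0" by (simp add: w_def)
  hence "complex_of_real ((2 * cos t)^2 - 2 * cos t - 1) = 0" by (simp add: s)
  hence "(2 * cos t)^2 - 2 * cos t - 1 = 0" by (simp only: of_real_eq_0_iff)
  thus ?thesis by (simp add: power2_eq_square)
qed

lemma cos_vals:
  assumes "4 * c ^ 2 - 2 * c - 1 = (0::real)"
  shows "c = (1 + sqrt 5) / 4 \<or> c = (1 - sqrt 5) / 4"
proof -
  have h: "(4 * c - 1)^2 = (sqrt 5)^2" using assms by (simp add: power2_eq_square algebra_simps)
  have "4 * c - 1 = sqrt 5 \<or> 4 * c - 1 = - sqrt 5" using h power2_eq_iff by blast
  thus ?thesis by auto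
qed

lemma pick1: "(c::real) = (1+r)/4 \<or> c = (1-r)/4 \<Longrightarrow> r > 1 \<Longrightarrow> c > 0 \<Longrightarrow> c = (1+r)/4"
  by (auto simp: field_simps)
lemma pick2: "(c::real) = (1+r)/4 \<or> c = (1-r)/4 \<Longrightarrow> r > 1 \<Longrightarrow> c < 0 \<Longrightarrow> c = (1-r)/4"
  by (auto simp: field_simps)
lemma vals: assumes "r * r = (5::real)" "1 < r" "r < 3"
  shows "(2 + 2 * ((1 + r) / 4)) * (2 + 2 * ((1 - r) / 4)) = 5"
   "(2 - 2 * ((1 + r) / 4)) * (2 - 2 * ((1 - r) / 4)) = 1"
   "0 < 2 + 2 * ((1 + r) / 4)" "0 < 2 - 2 * ((1 + r) / 4)" "2 - 2 * ((1 + r) / 4) < 1"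
  using assms by (simp_all add: field_simps)

lemma root1:
  shows "E (cis (pi/10)) PP = 0" "cos (pi/5) = (1 + sqrt 5) / 4"
proof -
  have w: "cis (pi/10)^2 = cis (pi/5)" by (simp add: DeMoivre)
  have w5: "cis (pi/5)^5 = -1" by (simp add: DeMoivre)
  have "sin (pi/5) > 0" by (rule sin_gt_zero) auto
  hence "Im (cis (pi/5)) \<noteq> Im (-1)" by simp
  hence "cis (pi/5) \<noteq> -1" by metis
  hence r: "(cis (pi/5))^4 - (cis (pi/5))^3 + (cis (pi/5))^2 - cis (pi/5) + 1 = 0"
    using PP_root w5 by blast
  thus "E (cis (pi/10)) PP = 0" by (simp add: E_PP w)
  have "cos (pi/5) > 0" using pi_gt_zero by (intro cos_gt_zero_pi; linarith)
  moreover have "sqrt 5 > 1" by simp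
  ultimately show "cos (pi/5) = (1 + sqrt 5) / 4"
    using pick1[OF cos_vals[OF cos_quad[OF r]]] by blast
qed

lemma root3:
  shows "E (cis (3*pi/10)) PP = 0" "cos (3*pi/5) = (1 - sqrt 5) / 4"
proof -
  have w: "cis (3*pi/10)^2 = cis (3*pi/5)" by (simp add: DeMoivre)
  have "cis (3*pi/5)^5 = cis (3 * pi)" by (simp add: DeMoivre)
  also have "\<dots> = cis (pi + 2*pi)" by (simp add: algebra_simps)
  also have "\<dots> = cis pi * cis (2*pi)" by (simp only: cis_mult)
  finally have w5: "cis (3*pi/5)^5 = -1" by simp
  have "sin (3*pi/5) > 0" by (rule sin_gt_zero) auto
  hence "Im (cis (3*pi/5)) \<noteq> Im (-1)" by simp
  hence "cis (3*pi/5) \<noteq> -1" by metis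
  hence r: "(cis (3*pi/5))^4 - (cis (3*pi/5))^3 + (cis (3*pi/5))^2 - cis (3*pi/5) + 1 = 0"
    using PP_root w5 by blast
  thus "E (cis (3*pi/10)) PP = 0" by (simp add: E_PP w)
  have "cos (2*pi/5) > 0" using pi_gt_zero by (intro cos_gt_zero_pi; linarith)
  moreover have "cos (3*pi/5) = - cos (2*pi/5)"
    using cos_pi_minus[of "2*pi/5"] by (simp add: field_simps)
  ultimately have "cos (3*pi/5) < 0" by simp
  moreover have "sqrt 5 > 1" by simp
  ultimately show "cos (3*pi/5) = (1 - sqrt 5) / 4"
    using pick2[OF cos_vals[OF cos_quad[OF r]]] by blast
qed

lemma final_real:
  fixes A B C D :: real
  assumes h1: "A^a * B^b = A^a' * B^b'" and h2: "C^a * D^b = C^a' * D^b'"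
    and AC: "A * C = 5" and BD: "B * D = 1" and A: "0 < A" and B: "0 < B" "B < 1"
  shows "a = a' \<and> b = b'"
proof -
  have "(A^a * B^b) * (C^a * D^b) = (A^a' * B^b') * (C^a' * D^b')" using h1 h2 by simp
  hence "(A*C)^a * (B*D)^b = (A*C)^a' * (B*D)^b'" by (simp add: power_mult_distrib algebra_simps)
  hence "(5::real)^a = 5^a'" using AC BD by simp
  hence aa: "a = a'" by simp
  have "B^b = B^b'" using h1 A by (simp add: aa)
  hence "b = b'" using B by (metis linorder_neq_iff power_strict_decreasing_iff less_irrefl)
  with aa show ?thesis by simp
qed

lemma doteq_refl: "doteq f f"
proof -
  have "laurent_poly 0" by (simp add: laurent_poly_def)
  hence "(0::int fls) \<in> I_t" unfolding I_t_def by force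
  hence "f - 1 * fls_X_intpow 0 * f \<in> I_t" by simp
  thus ?thesis unfolding doteq_def by blast
qed

lemma main_dir:
  assumes d: "doteq ((1 + tt)^a * (1 - tt)^b) ((1 + tt)^a' * (1 - tt)^b')"
  shows "a = a' \<and> b = b'"
proof -
  have r1: "(cmod (1 + cis (pi/10)^2)^2)^a * (cmod (1 - cis (pi/10)^2)^2)^b
       = (cmod (1 + cis (pi/10)^2)^2)^a' * (cmod (1 - cis (pi/10)^2)^2)^b'"
    by (rule norm_rel[OF _ root1(1) d]) simp
  have r3: "(cmod (1 + cis (3*pi/10)^2)^2)^a * (cmod (1 - cis (3*pi/10)^2)^2)^b
       = (cmod (1 + cis (3*pi/10)^2)^2)^a' * (cmod (1 - cis (3*pi/10)^2)^2)^b'"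
    by (rule norm_rel[OF _ root3(1) d]) simp
  have w1: "cis (pi/10)^2 = cis (pi/5)" by (simp add: DeMoivre)
  have w3: "cis (3*pi/10)^2 = cis (3*pi/5)" by (simp add: DeMoivre)
  define A where "A = 2 + 2 * ((1 + sqrt 5) / 4)"
  define B where "B = 2 - 2 * ((1 + sqrt 5) / 4)"
  define C where "C = 2 + 2 * ((1 - sqrt 5) / 4)"
  define D where "D = 2 - 2 * ((1 - sqrt 5) / 4)"
  have e1: "A^a * B^b = A^a' * B^b'"
    using r1 unfolding w1 cis_norms root1(2) A_def B_def .
  have e3: "C^a * D^b = C^a' * D^b'"
    using r3 unfolding w3 cis_norms root3(2) C_def D_def .
  have s5: "sqrt 5 * sqrt 5 = (5::real)" by simp
  have lt3: "sqrt 5 < 3" by (rule real_less_lsqrt) simp_all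
  have gt1: "sqrt 5 > 1" by simp
  show ?thesis
  proof (rule final_real[OF e1 e3])
    show "A * C = 5" unfolding A_def C_def by (rule vals[OF s5 gt1 lt3])
    show "B * D = 1" unfolding B_def D_def by (rule vals[OF s5 gt1 lt3])
    show "0 < A" unfolding A_def by (rule vals[OF s5 gt1 lt3])
    show "0 < B" unfolding B_def by (rule vals[OF s5 gt1 lt3])
    show "B < 1" unfolding B_def by (rule vals[OF s5 gt1 lt3])
  qed
qed

theorem lemma6p1:
  fixes k1 k2 k1' k2' :: nat
  shows "(doteq ((1 + tt) ^ k1 * (1 - tt) ^ k2) 1 \<longleftrightarrow> k1 = 0 \<and> k2 = 0)
       \<and> (doteq ((1 + tt) ^ k1 * (1 - tt) ^ k2) ((1 + tt) ^ k1' * (1 - tt) ^ k2')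
            \<longleftrightarrow> k1 = k1' \<and> k2 = k2')"
proof
  have "doteq ((1 + tt) ^ k1 * (1 - tt) ^ k2) ((1 + tt) ^ 0 * (1 - tt) ^ 0) \<longleftrightarrow> k1 = 0 \<and> k2 = 0"
    using main_dir[of k1 k2 0 0] doteq_refl by blast
  thus "doteq ((1 + tt) ^ k1 * (1 - tt) ^ k2) 1 \<longleftrightarrow> k1 = 0 \<and> k2 = 0" by simp
  show "doteq ((1 + tt) ^ k1 * (1 - tt) ^ k2) ((1 + tt) ^ k1' * (1 - tt) ^ k2')
            \<longleftrightarrow> k1 = k1' \<and> k2 = k2'"
    using main_dir[of k1 k2 k1' k2'] doteq_refl by blast
qed

end
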